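(* Let $\sigma$ be a confined position on $K_{a,b}$ with sides $L$ ($|L|=a$) and $R$ ($|R|=b$), and let $t\ge 0$. If $a$ divides $\alpha_t(L)$, then $u_t(\sigma,v)=\alpha_t(L)/a$ for every $v\in L$.
   Context: Parallel chip-firing game: a position $\sigma$ assigns a nonnegative integer to each vertex; writing $\Phi_\sigma(v)$ for the number of neighbors $w$ of $v$ with $\sigma(w)\ge\deg(w)$, the step operator is $U\sigma(v)=\sigma(v)+\Phi_\sigma(v)$ if $\sigma(v)\le \deg(v)-1$ and $U\sigma(v)=\sigma(v)+\Phi_\sigma(v)-\deg(v)$ otherwise. A position is confined if every vertex satisfies $\Phi_\sigma(v)\le\sigma(v)\le\Phi_\sigma(v)+\deg(v)-1$. In $K_{a,b}$ each vertex of $L$ is adjacent exactly to all vertices of $R$. $u_t(\sigma,v)=|\{s: 0\le s<t,\ U^s\sigma(v)\ge\deg(v)\}|$, and $\alpha_t(L)=\sum_{v\in L}u_t(\sigma,v)$. *)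

theory Defs
  imports Main
begin

definition deg :: "('v \<Rightarrow> 'v set) \<Rightarrow> 'v \<Rightarrow> nat" where
  "deg N v = card (N v)"

definition Phi :: "('v \<Rightarrow> 'v set) \<Rightarrow> ('v \<Rightarrow> nat) \<Rightarrow> 'v \<Rightarrow> nat" where
  "Phi N \<sigma> v = card {w \<in> N v. \<sigma> w \<ge> deg N w}"

(* step operator; "sigma(v) <= deg(v) - 1" is written as "sigma v < deg v" (integer reading) *)
definition U :: "('v \<Rightarrow> 'v set) \<Rightarrow> ('v \<Rightarrow> nat) \<Rightarrow> ('v \<Rightarrow> nat)" where
  "U N \<sigma> v = (if \<sigma> v < deg N v then \<sigma> v + Phi N \<sigma> v
               else \<sigma> v + Phi N \<sigma> v - deg N v)"

(* confined: Phi <= sigma(v) <= Phi + deg - 1 for every vertex (upper bound as strict <) *)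
definition confined :: "'v set \<Rightarrow> ('v \<Rightarrow> 'v set) \<Rightarrow> ('v \<Rightarrow> nat) \<Rightarrow> bool" where
  "confined V N \<sigma> \<longleftrightarrow>
     (\<forall>v\<in>V. Phi N \<sigma> v \<le> \<sigma> v \<and> \<sigma> v < Phi N \<sigma> v + deg N v)"

definition u :: "('v \<Rightarrow> 'v set) \<Rightarrow> nat \<Rightarrow> ('v \<Rightarrow> nat) \<Rightarrow> 'v \<Rightarrow> nat" where
  "u N t \<sigma> v = card {s. s < t \<and> (U N ^^ s) \<sigma> v \<ge> deg N v}"

definition alpha :: "('v \<Rightarrow> 'v set) \<Rightarrow> nat \<Rightarrow> ('v \<Rightarrow> nat) \<Rightarrow> 'v set \<Rightarrow> nat" where
  "alpha N t \<sigma> S = (\<Sum>v\<in>S. u N t \<sigma> v)"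

definition Kbip :: "'v set \<Rightarrow> 'v set \<Rightarrow> 'v \<Rightarrow> 'v set" where
  "Kbip L R v = (if v \<in> L then R else if v \<in> R then L else {})"

end

theory Submission
  imports Defs
begin

lemma card_Suc_filter:
  "card {s. s < Suc t \<and> P s} = card {s. s < t \<and> P s} + (if P t then 1 else 0)"
proof -
  have "{s. s < Suc t \<and> P s} = {s. s < t \<and> P s} \<union> (if P t then {t} else {})"
    by (auto simp: less_Suc_eq)
  then show ?thesis by auto
qed

theorem lemma3p2:
  fixes L R :: "'v set" and \<sigma> :: "'v \<Rightarrow> nat" and a b t :: nat
  assumes "finite L" and "finite R" and "L \<inter> R = {}"
    and "card L = a" and "card R = b"
    and "confined (L \<union> R) (Kbip L R) \<sigma>"
    and "a dvd alpha (Kbip L R) t \<sigma> L"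
  shows "\<forall>v\<in>L. u (Kbip L R) t \<sigma> v = alpha (Kbip L R) t \<sigma> L div a"
proof (cases "L = {}")
  case True then show ?thesis by simp
next
  case False
  define N where "N = Kbip L R"
  define X where "X s = (U N ^^ s) \<sigma>" for s
  define cc where "cc s = card {w \<in> R. deg N w \<le> X s w}" for s
  have NL: "N v = R" if "v \<in> L" for v using that by (simp add: N_def Kbip_def)
  have degL: "deg N v = b" if "v \<in> L" for v using that NL assms(5) by (simp add: deg_def)
  have PhiL: "Phi N (X s) v = cc s" if "v \<in> L" for v s
    using that NL by (simp add: Phi_def cc_def)
  have XS: "X (Suc s) v = (if X s v < b then X s v + cc s else X s v + cc s - b)"
    if "v \<in> L" for v s
    using that degL PhiL by (simp add: X_def U_def)
  have conf: "Phi N \<sigma> v \<le> \<sigma> v \<and> \<sigma> v < Phi N \<sigma> v + b" if "v \<in> L" for v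
    using assms(6) that degL by (auto simp: confined_def N_def)
  have X0: "X 0 = \<sigma>" by (simp add: X_def)
  have Phi0: "Phi N \<sigma> v = cc 0" if "v \<in> L" for v using PhiL[OF that, of 0] X0 by simp
  have uS: "u N (Suc s) \<sigma> v = u N s \<sigma> v + (if b \<le> X s v then 1 else 0)" if "v \<in> L" for v s
    using degL[OF that] card_Suc_filter by (simp add: u_def X_def)
  have ident: "X s v + b * u N s \<sigma> v = \<sigma> v + (\<Sum>i<s. cc i)" if "v \<in> L" for v s
  proof (induction s)
    case 0 then show ?case by (simp add: X0 u_def)
  next
    case (Suc s)
    then show ?case using XS[OF that, of s] uS[OF that, of s] by (auto split: if_splits)
  qed
  have inv: "\<exists>m. \<forall>v\<in>L. m \<le> X s v \<and> X s v < m + b" for s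
  proof (induction s)
    case 0 then show ?case using conf Phi0 X0 by metis
  next
    case (Suc s)
    then obtain m where m: "\<forall>v\<in>L. m \<le> X s v \<and> X s v < m + b" by blast
    show ?case
    proof (cases "b \<le> m")
      case True
      show ?thesis
        by (rule exI[of _ "m + cc s - b"]) (use m True XS in auto)
    next
      case False
      show ?thesis
        by (rule exI[of _ "cc s"]) (use m False XS in auto)
    qed
  qed
  obtain m where m: "\<forall>v\<in>L. m \<le> X t v \<and> X t v < m + b" using inv by blast
  have close: "u N t \<sigma> v < u N t \<sigma> w + 2" if "v \<in> L" "w \<in> L" for v w
  proof -
    have e: "X t v + b * u N t \<sigma> v + \<sigma> w = X t w + b * u N t \<sigma> w + \<sigma> v"
      using ident[OF that(1), of t] ident[OF that(2), of t] by simp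
    have m1: "m \<le> X t v" "X t w < m + b" using m that by auto
    have c1: "cc 0 \<le> \<sigma> w" "\<sigma> v < cc 0 + b"
      using conf[OF that(1)] conf[OF that(2)] Phi0[OF that(1)] Phi0[OF that(2)] by auto
    have "b * u N t \<sigma> v < b * u N t \<sigma> w + 2 * b"
      using e m1 c1 by linarith
    then have "b * u N t \<sigma> v < b * (u N t \<sigma> w + 2)" by (simp add: algebra_simps)
    then show ?thesis using mult_less_cancel1[of b "u N t \<sigma> v" "u N t \<sigma> w + 2"] by blast
  qed
  define f where "f v = u N t \<sigma> v" for v
  have fin: "finite (f ` L)" "f ` L \<noteq> {}" using assms(1) False by auto
  obtain v0 where v0a: "v0 \<in> L" "f v0 = Min (f ` L)" using Min_in[OF fin] by auto
  have v0: "v0 \<in> L" "\<forall>v\<in>L. f v0 \<le> f v"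
    using v0a Min_le[OF fin(1)] by auto
  define k where "k = f v0"
  define d where "d v = f v - k" for v
  have dle: "d v \<le> 1" if "v \<in> L" for v
    using close[OF that v0(1)] by (simp add: d_def k_def f_def)
  have fv: "f v = k + d v" if "v \<in> L" for v using v0 that by (simp add: d_def k_def)
  have sumf: "(\<Sum>v\<in>L. f v) = a * k + (\<Sum>v\<in>L. d v)"
    using fv assms(4) by (simp add: sum.distrib)
  have "(\<Sum>v\<in>L. d v) = (\<Sum>v\<in>L - {v0}. d v)"
    using v0(1) \<open>finite L\<close> by (simp add: sum.remove d_def k_def)
  also have "\<dots> \<le> (\<Sum>v\<in>L - {v0}. 1)" by (rule sum_mono) (use dle in auto)
  also have "\<dots> = a - 1" using assms(4) v0(1) \<open>finite L\<close> by simp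
  finally have sd: "(\<Sum>v\<in>L. d v) < a" using False assms(1,4) card_gt_0_iff[of L] by linarith
  have adv: "a dvd (\<Sum>v\<in>L. d v)"
    using assms(7) sumf by (simp add: alpha_def f_def N_def dvd_add_right_iff)
  have "(\<Sum>v\<in>L. d v) = 0"
    using adv sd by (metis dvd_imp_le neq0_conv not_le)
  then have d0: "\<forall>v\<in>L. d v = 0" using \<open>finite L\<close> by simp
  have apos: "a > 0" using False assms(1,4) card_gt_0_iff[of L] by metis
  have "alpha (Kbip L R) t \<sigma> L = a * k"
    using sumf d0 by (simp add: alpha_def f_def N_def)
  then show ?thesis using fv d0 apos by (simp add: f_def N_def)
qed

end
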